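(* Let $\theta\in\mathbb{R}_{\ge0}^V$ be a feasible solution in a general weighted graph on $n=|V|$ vertices. Then $\|W\theta\|_1\ge n+\frac{\|\theta\|_1-\mathsf{OPT}}{\mathsf{OPT}}$.
   Context: $W=(W_{u,v})_{u,v\in V}$ is a symmetric matrix with entries in $[0,1]$ and $W_{v,v}=1$ (the weighted graph). A vector $\theta\in\mathbb{R}_{\ge0}^V$ is feasible if $W\theta\ge\mathbf 1$ coordinatewise. $\mathsf{OPT}=\min\{\|\theta\|_1:\theta\ge0,\ W\theta\ge\mathbf 1\}$. *)

theory Defs
  imports Main "HOL-Analysis.Analysis"
begin

definition weighted_graph :: "('v::finite \<Rightarrow> 'v \<Rightarrow> real) \<Rightarrow> bool" where
  "weighted_graph W \<longleftrightarrow> (\<forall>u v. W u v = W v u) \<and> (\<forall>u v. 0 \<le> W u v \<and> W u v \<le> 1) \<and> (\<forall>v. W v v = 1)"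

definition Wmul :: "('v::finite \<Rightarrow> 'v \<Rightarrow> real) \<Rightarrow> ('v \<Rightarrow> real) \<Rightarrow> 'v \<Rightarrow> real" where
  "Wmul W \<theta> u = (\<Sum>v\<in>UNIV. W u v * \<theta> v)"

definition l1norm :: "('v::finite \<Rightarrow> real) \<Rightarrow> real" where
  "l1norm x = (\<Sum>v\<in>UNIV. \<bar>x v\<bar>)"

definition feasible :: "('v::finite \<Rightarrow> 'v \<Rightarrow> real) \<Rightarrow> ('v \<Rightarrow> real) \<Rightarrow> bool" where
  "feasible W \<theta> \<longleftrightarrow> (\<forall>v. 0 \<le> \<theta> v) \<and> (\<forall>u. 1 \<le> Wmul W \<theta> u)"

definition OPT :: "('v::finite \<Rightarrow> 'v \<Rightarrow> real) \<Rightarrow> real" where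
  "OPT W = Inf {l1norm \<theta> | \<theta>. feasible W \<theta>}"

end

theory Submission
  imports Defs
begin

lemma l1_nonneg: "(\<forall>v. 0 \<le> x v) \<Longrightarrow> l1norm x = (\<Sum>v\<in>UNIV. x v)"
  unfolding l1norm_def by simp

lemma dual_bound:
  fixes W :: "'v::finite \<Rightarrow> 'v \<Rightarrow> real"
  assumes sym: "\<forall>u v. W u v = W v u"
    and ft: "feasible W \<theta>" and fp: "feasible W \<phi>"
    and c: "\<forall>u. Wmul W \<theta> u \<le> c" and cpos: "c > 0"
  shows "l1norm \<theta> \<le> c * l1norm \<phi>"
proof -
  have t0: "\<forall>v. 0 \<le> \<theta> v" and p0: "\<forall>v. 0 \<le> \<phi> v" and p1: "\<forall>u. 1 \<le> Wmul W \<phi> u"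
    using ft fp unfolding feasible_def by auto
  have "(\<Sum>u\<in>UNIV. \<theta> u) \<le> (\<Sum>u\<in>UNIV. \<theta> u * Wmul W \<phi> u)"
    by (rule sum_mono) (use t0 p1 in \<open>metis mult.right_neutral mult_left_mono\<close>)
  also have "\<dots> = (\<Sum>u\<in>UNIV. \<Sum>v\<in>UNIV. \<theta> u * W u v * \<phi> v)"
    unfolding Wmul_def by (simp add: sum_distrib_left mult.assoc)
  also have "\<dots> = (\<Sum>v\<in>UNIV. \<Sum>u\<in>UNIV. \<theta> u * W u v * \<phi> v)"
    by (rule sum.swap)
  also have "\<dots> = (\<Sum>v\<in>UNIV. \<phi> v * Wmul W \<theta> v)"
    unfolding Wmul_def by (simp add: sum_distrib_left sum_distrib_right sym mult.commute mult.left_commute)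
  also have "\<dots> \<le> (\<Sum>v\<in>UNIV. \<phi> v * c)"
    by (rule sum_mono) (use p0 c in \<open>simp add: mult_left_mono\<close>)
  also have "\<dots> = c * (\<Sum>v\<in>UNIV. \<phi> v)"
    by (metis mult.commute sum_distrib_right)
  finally show ?thesis using l1_nonneg[OF t0] l1_nonneg[OF p0] by simp
qed

theorem lemma7p5:
  fixes W :: "'v::finite \<Rightarrow> 'v \<Rightarrow> real" and \<theta> :: "'v \<Rightarrow> real"
  assumes "weighted_graph W"
    and "feasible W \<theta>"
  shows "l1norm (Wmul W \<theta>) \<ge> real CARD('v) + (l1norm \<theta> - OPT W) / OPT W"
proof -
  have sym: "\<forall>u v. W u v = W v u" using assms(1) unfolding weighted_graph_def by auto
  have t0: "\<forall>v. 0 \<le> \<theta> v" and t1: "\<forall>u. 1 \<le> Wmul W \<theta> u"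
    using assms(2) unfolding feasible_def by auto
  define c where "c = Max (range (Wmul W \<theta>))"
  have cge: "\<forall>u. Wmul W \<theta> u \<le> c" unfolding c_def by simp
  have "c \<in> range (Wmul W \<theta>)" unfolding c_def by (rule Max_in) auto
  then obtain u0 where u0: "Wmul W \<theta> u0 = c" by blast
  have c1: "c \<ge> 1" using u0 t1 by metis
  have Spos: "l1norm \<theta> > 0"
  proof (rule ccontr)
    assume "\<not> l1norm \<theta> > 0"
    hence "(\<Sum>v\<in>UNIV. \<theta> v) \<le> 0" using l1_nonneg[OF t0] by simp
    moreover have "(\<Sum>v\<in>UNIV. \<theta> v) \<ge> 0" using t0 by (simp add: sum_nonneg)
    ultimately have "(\<Sum>v\<in>UNIV. \<theta> v) = 0" by linarith
    hence "\<forall>v. \<theta> v = 0" using t0 sum_nonneg_eq_0_iff[of UNIV \<theta>] by simp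
    hence "Wmul W \<theta> u0 = 0" unfolding Wmul_def by simp
    thus False using t1 by (metis not_one_le_zero)
  qed
  define A where "A = {l1norm \<phi> | \<phi>. feasible W \<phi>}"
  have lb: "\<forall>x\<in>A. l1norm \<theta> / c \<le> x"
  proof
    fix x assume "x \<in> A"
    then obtain \<phi> where x: "x = l1norm \<phi>" and f: "feasible W \<phi>" unfolding A_def by blast
    have "l1norm \<theta> \<le> c * l1norm \<phi>" using dual_bound[OF sym assms(2) f cge] c1 by simp
    thus "l1norm \<theta> / c \<le> x" using c1 x by (simp add: pos_divide_le_eq mult.commute)
  qed
  have "A \<noteq> {}" using assms(2) unfolding A_def by auto
  hence Olb: "l1norm \<theta> / c \<le> OPT W" unfolding OPT_def A_def[symmetric]
    using lb by (meson cInf_greatest)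
  have Opos: "OPT W > 0" using Olb Spos c1
  proof -
    have "l1norm \<theta> / c > 0" using Spos c1 by simp
    thus ?thesis using Olb by linarith
  qed
  have "l1norm \<theta> / OPT W \<le> c" using Olb Opos c1 Spos
    by (simp add: pos_divide_le_eq pos_le_divide_eq mult.commute)
  hence key: "(l1norm \<theta> - OPT W) / OPT W \<le> c - 1" using Opos
    by (simp add: diff_divide_distrib)
  have WS: "l1norm (Wmul W \<theta>) = (\<Sum>u\<in>UNIV. Wmul W \<theta> u)"
    using t1 l1_nonneg[of "Wmul W \<theta>"] by (meson order.trans zero_le_one)
  have "(\<Sum>u\<in>UNIV. Wmul W \<theta> u) = Wmul W \<theta> u0 + (\<Sum>u\<in>UNIV-{u0}. Wmul W \<theta> u)"
    by (simp add: sum.remove)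
  moreover have "(\<Sum>u\<in>UNIV-{u0}. Wmul W \<theta> u) \<ge> (\<Sum>u\<in>UNIV-{u0}. 1)"
    by (rule sum_mono) (use t1 in auto)
  moreover have "(\<Sum>u\<in>(UNIV::'v set)-{u0}. (1::real)) = real CARD('v) - 1"
    by (simp add: card_Diff_singleton of_nat_diff)
  ultimately have "(\<Sum>u\<in>UNIV. Wmul W \<theta> u) \<ge> c + real CARD('v) - 1" using u0 by linarith
  thus ?thesis using WS key by linarith
qed

end
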